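(* Let $G=(V,E)$ be a finite, connected, undirected graph with $n\ge2$ vertices and let $0<r<1$. For any $\epsilon\in(0,1)$ and any $t\ge\frac{1}{1-r}n^3/\epsilon$, the Moran process on $G$ with fitness $r$ (started from a single mutant) reaches absorption within $t$ steps with probability at least $1-\epsilon$.
   Context: The Moran process on $G$ with mutant fitness $r>0$ is the Markov chain $(X_i)_{i\ge0}$ whose state $X_i\subseteq V$ is the set of vertices occupied by mutants; every other vertex is occupied by a non-mutant of fitness $1$. Write $W(S)=r|S|+|V\setminus S|$ for the total fitness. Given $X_i=S$, one step is: choose a vertex $x$ with probability $r/W(S)$ if $x\in S$ and $1/W(S)$ if $x\notin S$; then choose a neighbour $y$ of $x$ uniformly at random; set $X_{i+1}=S\cup\{y\}$ if $x\in S$ and $X_{i+1}=S\setminus\{y\}$ if $x\notin S$. The process starts from $X_0=\{x\}$ for a single vertex $x$. Absorption means reaching $X_i=\emptyset$ or $X_i=V$. *)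

theory Defs
  imports "HOL-Probability.Probability_Mass_Function"
begin

definition conn_graph :: "'a set \<Rightarrow> ('a \<Rightarrow> 'a \<Rightarrow> bool) \<Rightarrow> bool" where
  "conn_graph V E \<longleftrightarrow> finite V
     \<and> (\<forall>x y. E x y \<longrightarrow> x \<in> V \<and> y \<in> V)
     \<and> (\<forall>x y. E x y \<longrightarrow> E y x)
     \<and> (\<forall>x. \<not> E x x)
     \<and> (\<forall>x\<in>V. \<forall>y\<in>V. E\<^sup>*\<^sup>* x y)"

definition total_fitness :: "'a set \<Rightarrow> real \<Rightarrow> 'a set \<Rightarrow> real" where
  "total_fitness V r S = r * real (card S) + real (card (V - S))"

definition moran_choose :: "'a set \<Rightarrow> real \<Rightarrow> 'a set \<Rightarrow> 'a pmf" where
  "moran_choose V r S = embed_pmf (\<lambda>x. if x \<in> V then (if x \<in> S then r else 1) / total_fitness V r S else 0)"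

definition moran_step :: "'a set \<Rightarrow> ('a \<Rightarrow> 'a \<Rightarrow> bool) \<Rightarrow> real \<Rightarrow> 'a set \<Rightarrow> 'a set pmf" where
  "moran_step V E r S =
     do { x \<leftarrow> moran_choose V r S;
          y \<leftarrow> pmf_of_set {y. E x y};
          return_pmf (if x \<in> S then insert y S else S - {y}) }"

text \<open>Joint distribution of (X_k, [X_i absorbed for some i \<le> k]) given X_0 = S0.\<close>
fun moran_dist :: "'a set \<Rightarrow> ('a \<Rightarrow> 'a \<Rightarrow> bool) \<Rightarrow> real \<Rightarrow> 'a set \<Rightarrow> nat \<Rightarrow> ('a set \<times> bool) pmf" where
  "moran_dist V E r S0 0 = return_pmf (S0, S0 = {} \<or> S0 = V)"
| "moran_dist V E r S0 (Suc k) =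
     bind_pmf (moran_dist V E r S0 k)
       (\<lambda>(S, b). map_pmf (\<lambda>S'. (S', b \<or> S' = {} \<or> S' = V)) (moran_step V E r S))"

definition absorbed_within :: "'a set \<Rightarrow> ('a \<Rightarrow> 'a \<Rightarrow> bool) \<Rightarrow> real \<Rightarrow> 'a \<Rightarrow> nat \<Rightarrow> real" where
  "absorbed_within V E r x t = measure_pmf.prob (moran_dist V E r {x} t) {p. snd p}"

end

theory Submission
  imports Defs
begin

lemma integral_bind_pmf_real:
  fixes f :: "_ \<Rightarrow> real"
  assumes "\<And>x. \<bar>f x\<bar> \<le> B"
  shows "measure_pmf.expectation (bind_pmf M N) f = measure_pmf.expectation M (\<lambda>x. measure_pmf.expectation (N x) f)"
  unfolding measure_pmf_bind
  apply (rule integral_bind[where K="count_space UNIV" and B=B and B'=1])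
  using assms measurable_measure_pmf[of N] by (auto simp: measure_pmf.emeasure_space_1 prob_space_imp_subprob_space measure_pmf.finite_measure_axioms)

definition deg :: "('a \<Rightarrow> 'a \<Rightarrow> bool) \<Rightarrow> 'a \<Rightarrow> nat" where
  "deg E x = card {y. E x y}"

definition phi :: "'a set \<Rightarrow> ('a \<Rightarrow> 'a \<Rightarrow> bool) \<Rightarrow> 'a set \<Rightarrow> real" where
  "phi V E S = (\<Sum>v\<in>S \<inter> V. 1 / real (deg E v))"

lemma inv_deg_le1: "1 / real (deg E v) \<le> 1" "0 \<le> 1 / real (deg E v)"
  by (cases "deg E v = 0"; simp)+

lemma phi_bounds:
  assumes "finite V"
  shows "0 \<le> phi V E S" "phi V E S \<le> real (card V)"
proof -
  show "0 \<le> phi V E S" unfolding phi_def by (intro sum_nonneg) (simp add: inv_deg_le1)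
  have "phi V E S \<le> (\<Sum>v\<in>S \<inter> V. 1)" unfolding phi_def by (intro sum_mono) (simp add: inv_deg_le1)
  also have "\<dots> = real (card (S \<inter> V))" by simp
  also have "\<dots> \<le> real (card V)" using assms by (simp add: card_mono)
  finally show "phi V E S \<le> real (card V)" .
qed

locale cg =
  fixes V :: "'a set" and E :: "'a \<Rightarrow> 'a \<Rightarrow> bool"
  assumes cg: "conn_graph V E" and two: "card V \<ge> 2"
begin

lemma finV: "finite V" using cg by (simp add: conn_graph_def)
lemma EV: "E x y \<Longrightarrow> x \<in> V \<and> y \<in> V" using cg by (simp add: conn_graph_def)
lemma Esym: "E x y \<Longrightarrow> E y x" using cg by (simp add: conn_graph_def)
lemma Eirr: "\<not> E x x" using cg by (simp add: conn_graph_def)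
lemma Econn: "x \<in> V \<Longrightarrow> y \<in> V \<Longrightarrow> E\<^sup>*\<^sup>* x y" using cg by (simp add: conn_graph_def)

lemma nbr_sub: "{y. E x y} \<subseteq> V" using EV by auto
lemma nbr_fin: "finite {y. E x y}" using nbr_sub finV finite_subset by blast

lemma nbr_ne: assumes "x \<in> V" shows "{y. E x y} \<noteq> {}"
proof -
  have "\<exists>z\<in>V. z \<noteq> x"
  proof (rule ccontr)
    assume "\<not> ?thesis" then have "V \<subseteq> {x}" by auto
    then have "card V \<le> 1" using card_mono[of "{x}" V] by simp
    with two show False by simp
  qed
  then obtain z where z: "z \<in> V" "z \<noteq> x" by blast
  have "E\<^sup>*\<^sup>* x z" using Econn assms z by blast
  then show ?thesis using z(2) by (cases rule: converse_rtranclpE) auto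
qed

lemma deg_ge1: "x \<in> V \<Longrightarrow> 1 \<le> deg E x"
  unfolding deg_def using nbr_ne nbr_fin by (simp add: Suc_le_eq card_gt_0_iff)

lemma deg_le: "deg E x \<le> card V"
  unfolding deg_def using nbr_sub finV by (simp add: card_mono)

lemma cardV_pos: "0 < card V" using two by simp

lemma boundary:
  assumes "a \<in> S" "b \<in> V" "b \<notin> S" "a \<in> V"
  shows "\<exists>u v. u \<in> S \<and> v \<in> V \<and> v \<notin> S \<and> E u v"
proof -
  have "E\<^sup>*\<^sup>* a b" using Econn assms by blast
  then show ?thesis using assms(2,3)
  proof (induction rule: rtranclp_induct)
    case base then show ?case using assms by auto
  next
    case (step y z)
    show ?case
    proof (cases "y \<in> S")
      case True then show ?thesis using step EV by blast
    next
      case False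
      then show ?thesis using step EV by blast
    qed
  qed
qed

end

locale cgr = cg +
  fixes r :: real
  assumes rpos: "0 < r" and rlt: "r < 1"
begin

abbreviation "W S \<equiv> total_fitness V r S"

lemma card_split: "S \<subseteq> V \<Longrightarrow> card V = card S + card (V - S)"
  using finV by (metis card_Diff_subset card_mono finite_subset le_add_diff_inverse)

lemma W_pos: assumes "S \<subseteq> V" shows "0 < W S"
proof -
  have "real (card S) * r + real (card (V - S)) * 1 > 0"
  proof (cases "card S = 0")
    case True then show ?thesis using card_split[OF assms] cardV_pos by simp
  next
    case False then show ?thesis using rpos by (simp add: add_pos_nonneg)
  qed
  then show ?thesis unfolding total_fitness_def by (simp add: mult.commute)
qed

lemma W_le: assumes "S \<subseteq> V" shows "W S \<le> real (card V)"
proof -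
  have "r * real (card S) \<le> real (card S)" using rlt by (simp add: mult_left_le_one_le rpos less_imp_le mult.commute mult_le_cancel_left1)
  then show ?thesis unfolding total_fitness_def using card_split[OF assms] by simp
qed

definition wt :: "'a set \<Rightarrow> 'a \<Rightarrow> real" where
  "wt S v = (if v \<in> V then (if v \<in> S then r else 1) / W S else 0)"

lemma wt_nonneg: "S \<subseteq> V \<Longrightarrow> 0 \<le> wt S v"
  using W_pos[of S] rpos by (simp add: wt_def)

lemma sum_wt: assumes "S \<subseteq> V" shows "(\<Sum>v\<in>V. wt S v) = 1"
proof -
  have "(\<Sum>v\<in>V. wt S v) = (\<Sum>v\<in>V. (if v \<in> S then r else 1)) / W S"
    unfolding wt_def sum_divide_distrib by simp
  also have "(\<Sum>v\<in>V. (if v \<in> S then r else 1)) = r * card S + card (V - S)"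
    using finV assms by (simp add: sum.If_cases Int_absorb1 Diff_eq)
  also have "\<dots> = W S" by (simp add: total_fitness_def)
  finally show ?thesis using W_pos[OF assms] by simp
qed

lemma pmf_choose: assumes "S \<subseteq> V" shows "pmf (moran_choose V r S) v = wt S v"
proof -
  have "(\<integral>\<^sup>+x. ennreal (wt S x) \<partial>count_space UNIV) = (\<Sum>x\<in>V. ennreal (wt S x))"
    by (rule nn_integral_count_space') (auto simp: finV wt_def)
  also have "\<dots> = ennreal (\<Sum>x\<in>V. wt S x)"
    using wt_nonneg[OF assms] by (simp add: sum_ennreal)
  finally have "(\<integral>\<^sup>+x. ennreal (wt S x) \<partial>count_space UNIV) = 1" using sum_wt[OF assms] by simp
  then show ?thesis unfolding moran_choose_def
    using pmf_embed_pmf[of "wt S"] wt_nonneg[OF assms] by (simp add: wt_def[abs_def])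
qed

lemma set_choose: assumes "S \<subseteq> V" shows "set_pmf (moran_choose V r S) \<subseteq> V"
  using pmf_choose[OF assms] by (auto simp: set_pmf_iff wt_def split: if_splits)


definition dl :: "'a set \<Rightarrow> 'a \<Rightarrow> 'a \<Rightarrow> real" where
  "dl S x y = (if x \<in> S then (if y \<in> S then 0 else 1 / real (deg E y))
               else (if y \<in> S then - (1 / real (deg E y)) else 0))"

lemma phi_g: assumes "y \<in> V"
  shows "phi V E (if x \<in> S then insert y S else S - {y}) = phi V E S + dl S x y"
proof (cases "x \<in> S")
  case True
  show ?thesis
  proof (cases "y \<in> S")
    case True then show ?thesis using \<open>x \<in> S\<close> by (simp add: dl_def insert_absorb)
  next
    case False
    have "insert y S \<inter> V = insert y (S \<inter> V)" using assms by auto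
    then show ?thesis using True False finV by (simp add: phi_def dl_def)
  qed
next
  case False
  show ?thesis
  proof (cases "y \<in> S")
    case True
    have "(S - {y}) \<inter> V = (S \<inter> V) - {y}" by auto
    then show ?thesis using True False finV assms
      by (simp add: phi_def dl_def sum_diff1)
  next
    case False2: False
    then show ?thesis using False by (simp add: dl_def)
  qed
qed

lemma sum_dl_in: assumes "x \<in> S" "S \<subseteq> V"
  shows "(\<Sum>y\<in>{y. E x y}. dl S x y) = (\<Sum>y\<in>{y\<in>V - S. E x y}. 1 / real (deg E y))"
proof -
  have "(\<Sum>y\<in>{y. E x y}. dl S x y) = (\<Sum>y\<in>{y. E x y}. if y \<notin> S then 1 / real (deg E y) else 0)"
    using assms by (intro sum.cong) (auto simp: dl_def)
  also have "\<dots> = (\<Sum>y\<in>{y\<in>{y. E x y}. y \<notin> S}. 1 / real (deg E y))"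
    by (rule sum.inter_filter[symmetric]) (rule nbr_fin)
  also have "{y\<in>{y. E x y}. y \<notin> S} = {y\<in>V - S. E x y}" using EV by auto
  finally show ?thesis .
qed

lemma sum_dl_out: assumes "x \<notin> S" "S \<subseteq> V"
  shows "(\<Sum>y\<in>{y. E x y}. dl S x y) = - (\<Sum>y\<in>{y\<in>S. E x y}. 1 / real (deg E y))"
proof -
  have "(\<Sum>y\<in>{y. E x y}. dl S x y) = - (\<Sum>y\<in>{y. E x y}. if y \<in> S then 1 / real (deg E y) else 0)"
    using assms by (simp add: dl_def sum_negf[symmetric] if_distrib cong: if_cong)
  also have "(\<Sum>y\<in>{y. E x y}. if y \<in> S then 1 / real (deg E y) else 0) = (\<Sum>y\<in>{y\<in>{y. E x y}. y \<in> S}. 1 / real (deg E y))"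
    by (rule sum.inter_filter[symmetric]) (rule nbr_fin)
  also have "{y\<in>{y. E x y}. y \<in> S} = {y\<in>S. E x y}" using EV assms by auto
  finally show ?thesis .
qed


lemma phi_abs: "\<bar>phi V E S\<bar> \<le> real (card V)"
  using phi_bounds[OF finV, of E S] by simp

lemma inner_exp: assumes "x \<in> V" "S \<subseteq> V"
  shows "measure_pmf.expectation (pmf_of_set {y. E x y}) (\<lambda>y. phi V E (if x \<in> S then insert y S else S - {y}))
     = phi V E S + (\<Sum>y\<in>{y. E x y}. dl S x y) / real (deg E x)"
proof -
  have "measure_pmf.expectation (pmf_of_set {y. E x y}) (\<lambda>y. phi V E (if x \<in> S then insert y S else S - {y}))
     = (\<Sum>y\<in>{y. E x y}. phi V E S + dl S x y) / real (deg E x)"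
    using nbr_fin nbr_ne[OF assms(1)]
    by (subst integral_pmf_of_set) (auto simp: deg_def EV phi_g[of _ x S] intro!: sum.cong)
  also have "\<dots> = phi V E S + (\<Sum>y\<in>{y. E x y}. dl S x y) / real (deg E x)"
    using deg_ge1[OF assms(1)] by (simp add: sum.distrib deg_def[symmetric] add_divide_distrib)
  finally show ?thesis .
qed

lemma step_exp: assumes "S \<subseteq> V"
  shows "measure_pmf.expectation (moran_step V E r S) (phi V E)
     = phi V E S + (\<Sum>x\<in>V. wt S x * ((\<Sum>y\<in>{y. E x y}. dl S x y) / real (deg E x)))"
proof -
  have "measure_pmf.expectation (moran_step V E r S) (phi V E)
     = measure_pmf.expectation (moran_choose V r S) (\<lambda>x. measure_pmf.expectation (pmf_of_set {y. E x y}) (\<lambda>y. phi V E (if x \<in> S then insert y S else S - {y})))"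
    unfolding moran_step_def
    by (simp add: integral_bind_pmf_real[OF phi_abs] integral_bind_pmf_real[where B="real (card V)"] phi_abs)
  also have "\<dots> = (\<Sum>x\<in>V. (phi V E S + (\<Sum>y\<in>{y. E x y}. dl S x y) / real (deg E x)) * wt S x)"
    using set_choose[OF assms] pmf_choose[OF assms] inner_exp[OF _ assms]
    by (subst integral_measure_pmf_real[of V]) (auto simp: finV intro!: sum.cong)
  also have "\<dots> = phi V E S * (\<Sum>x\<in>V. wt S x) + (\<Sum>x\<in>V. wt S x * ((\<Sum>y\<in>{y. E x y}. dl S x y) / real (deg E x)))"
    by (simp add: algebra_simps sum.distrib sum_distrib_left)
  finally show ?thesis using sum_wt[OF assms] by simp
qed


definition bnd :: "'a set \<Rightarrow> real" where
  "bnd S = (\<Sum>x\<in>S. \<Sum>y\<in>{y\<in>V - S. E x y}. 1 / (real (deg E x) * real (deg E y)))"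

lemma drift: assumes "S \<subseteq> V"
  shows "(\<Sum>x\<in>V. wt S x * ((\<Sum>y\<in>{y. E x y}. dl S x y) / real (deg E x))) = - ((1 - r) / W S) * bnd S"
proof -
  let ?t = "\<lambda>x. wt S x * ((\<Sum>y\<in>{y. E x y}. dl S x y) / real (deg E x))"
  let ?h = "\<lambda>x y. 1 / (real (deg E x) * real (deg E y))"
  have fS: "finite S" using assms finV finite_subset by blast
  have eqS: "?t x = r / W S * (\<Sum>y\<in>{y\<in>V - S. E x y}. ?h x y)" if x: "x \<in> S" for x
      using x assms by (auto simp: sum_dl_in wt_def sum_divide_distrib sum_distrib_left intro!: sum.cong)
  have eqN: "?t x = - (1 / W S) * (\<Sum>y\<in>{y\<in>S. E x y}. ?h x y)" if x: "x \<in> V - S" for x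
      using x assms by (auto simp: sum_dl_out wt_def sum_divide_distrib sum_distrib_left sum_negf intro!: sum.cong)
  have "(\<Sum>x\<in>V. ?t x) = (\<Sum>x\<in>V - S. ?t x) + (\<Sum>x\<in>S. ?t x)"
    using sum.subset_diff[OF assms finV] by simp
  also have "(\<Sum>x\<in>S. ?t x) = (\<Sum>x\<in>S. r / W S * (\<Sum>y\<in>{y\<in>V - S. E x y}. ?h x y))"
    using eqS by (rule sum.cong[OF refl])
  also have "\<dots> = r / W S * bnd S" by (simp add: bnd_def sum_distrib_left)
  also have "(\<Sum>x\<in>V - S. ?t x) = (\<Sum>x\<in>V - S. - (1 / W S) * (\<Sum>y\<in>{y\<in>S. E x y}. ?h x y))"
    using eqN by (rule sum.cong[OF refl])
  also have "\<dots> = - (1 / W S) * (\<Sum>x\<in>V - S. \<Sum>y\<in>{y\<in>S. E x y}. ?h x y)"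
    by (simp add: sum_distrib_left)
  also have "(\<Sum>x\<in>V - S. \<Sum>y\<in>{y\<in>S. E x y}. ?h x y) = (\<Sum>y\<in>S. \<Sum>x\<in>{x\<in>V - S. E x y}. ?h x y)"
    by (rule sum.swap_restrict) (use finV fS in auto)
  also have "\<dots> = bnd S"
    unfolding bnd_def using Esym by (intro sum.cong refl) (auto simp: mult.commute intro!: sum.cong)
  finally show ?thesis by (simp add: algebra_simps diff_divide_distrib)
qed


lemma bnd_nonneg: "0 \<le> bnd S"
  unfolding bnd_def by (intro sum_nonneg) auto

lemma bnd_pos: assumes "S \<subseteq> V" "S \<noteq> {}" "S \<noteq> V"
  shows "1 / (real (card V) * real (card V)) \<le> bnd S"
proof -
  obtain a where a: "a \<in> S" using assms by auto
  obtain b where b: "b \<in> V" "b \<notin> S" using assms by auto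
  obtain u v where uv: "u \<in> S" "v \<in> V" "v \<notin> S" "E u v"
    using boundary[OF a b] a assms by blast
  have fS: "finite S" using assms finV finite_subset by blast
  have u: "u \<in> V" using uv assms by auto
  have "1 / (real (card V) * real (card V)) \<le> 1 / (real (deg E u) * real (deg E v))"
    using deg_ge1[OF u] deg_ge1[OF uv(2)] deg_le[of u] deg_le[of v]
    by (intro divide_left_mono mult_mono) auto
  also have "\<dots> \<le> (\<Sum>y\<in>{y\<in>V - S. E u y}. 1 / (real (deg E u) * real (deg E y)))"
    by (rule member_le_sum[where f="\<lambda>y. 1 / (real (deg E u) * real (deg E y))"]) (use uv finV in auto)
  also have "\<dots> \<le> bnd S"
    unfolding bnd_def
    by (rule member_le_sum[where f="\<lambda>x. \<Sum>y\<in>{y\<in>V - S. E x y}. 1 / (real (deg E x) * real (deg E y))"])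
       (use uv fS in \<open>auto intro!: sum_nonneg\<close>)
  finally show ?thesis .
qed

lemma step_le: assumes "S \<subseteq> V"
  shows "measure_pmf.expectation (moran_step V E r S) (phi V E) \<le> phi V E S"
  using step_exp[OF assms] drift[OF assms] bnd_nonneg[of S] W_pos[OF assms] rlt
  by (simp add: mult_nonneg_nonneg)

lemma step_lt: assumes "S \<subseteq> V" "S \<noteq> {}" "S \<noteq> V"
  shows "measure_pmf.expectation (moran_step V E r S) (phi V E) \<le> phi V E S - (1 - r) / real (card V) ^ 3"
proof -
  let ?n = "real (card V)"
  have n: "0 < ?n" using cardV_pos by simp
  have "(1 - r) / ?n ^ 3 = ((1 - r) / ?n) * (1 / (?n * ?n))" by (simp add: power3_eq_cube)
  also have "\<dots> \<le> ((1 - r) / W S) * bnd S"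
    using bnd_pos[OF assms] W_pos[OF assms(1)] W_le[OF assms(1)] rlt n
    by (intro mult_mono divide_left_mono) (auto intro: mult_pos_pos)
  finally show ?thesis using step_exp[OF assms(1)] drift[OF assms(1)] by simp
qed

lemma set_step: assumes "S \<subseteq> V" "S' \<in> set_pmf (moran_step V E r S)" shows "S' \<subseteq> V"
  using assms set_choose[OF assms(1)] nbr_ne nbr_fin EV
  by (auto simp: moran_step_def split: if_splits)


end

lemma int_bdd: fixes f :: "_ \<Rightarrow> real"
  assumes "\<And>x. \<bar>f x\<bar> \<le> B" shows "integrable (measure_pmf M) f"
  by (rule measure_pmf.integrable_const_bound[where B=B]) (use assms in auto)

locale cgx = cgr +
  fixes x0 assumes x0: "x0 \<in> V"
begin

abbreviation "mu k \<equiv> moran_dist V E r {x0} k"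
definition gg :: "'a set \<times> bool \<Rightarrow> real" where "gg p = (if snd p then 0 else 1)"
definition "Phi k = measure_pmf.expectation (mu k) (\<lambda>p. phi V E (fst p))"
definition "Pk k = measure_pmf.expectation (mu k) gg"
definition "dlt = (1 - r) / real (card V) ^ 3"

lemma support: "p \<in> set_pmf (mu k) \<Longrightarrow> fst p \<subseteq> V \<and> (\<not> snd p \<longrightarrow> fst p \<noteq> {} \<and> fst p \<noteq> V)"
proof (induction k arbitrary: p)
  case 0 then show ?case using x0 by auto
next
  case (Suc k)
  then obtain S b S' where Sb: "(S, b) \<in> set_pmf (mu k)" and S': "S' \<in> set_pmf (moran_step V E r S)"
    and p: "p = (S', b \<or> S' = {} \<or> S' = V)"
    by auto
  have "S \<subseteq> V" using Suc.IH[OF Sb] by simp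
  then have "S' \<subseteq> V" using set_step S' by blast
  then show ?case using p by auto
qed

lemma gg_abs: "\<bar>gg p\<bar> \<le> 1" by (simp add: gg_def)
lemma phi_abs': "\<bar>phi V E (fst p)\<bar> \<le> real (card V)" by (rule phi_abs)

lemma Phi_step: "Phi (Suc k) \<le> Phi k - dlt * Pk k"
proof -
  have "Phi (Suc k) = measure_pmf.expectation (mu k)
      (\<lambda>q. measure_pmf.expectation (moran_step V E r (fst q)) (phi V E))"
    unfolding Phi_def
    by (simp add: integral_bind_pmf_real[OF phi_abs'] case_prod_beta)
  also have "\<dots> \<le> measure_pmf.expectation (mu k) (\<lambda>q. phi V E (fst q) - dlt * gg q)"
  proof (rule integral_mono_AE)
    show "integrable (measure_pmf (mu k)) (\<lambda>q. measure_pmf.expectation (moran_step V E r (fst q)) (phi V E))"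
      by (rule int_bdd[where B="real (card V)"])
         (rule order_trans[OF integral_abs_bound], rule order_trans[OF integral_mono[where g="\<lambda>_. real (card V)"]],
          auto intro: int_bdd phi_abs)
    show "integrable (measure_pmf (mu k)) (\<lambda>q. phi V E (fst q) - dlt * gg q)"
      by (intro Bochner_Integration.integrable_diff integrable_mult_right int_bdd[OF phi_abs'] int_bdd[OF gg_abs])
    show "AE q in measure_pmf (mu k). measure_pmf.expectation (moran_step V E r (fst q)) (phi V E) \<le> phi V E (fst q) - dlt * gg q"
    proof (rule AE_pmfI)
      fix q assume q: "q \<in> set_pmf (mu k)"
      show "measure_pmf.expectation (moran_step V E r (fst q)) (phi V E) \<le> phi V E (fst q) - dlt * gg q"
        using support[OF q] step_le step_lt by (auto simp: gg_def dlt_def)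
    qed
  qed
  also have "\<dots> = Phi k - dlt * Pk k"
    unfolding Phi_def Pk_def
    by (simp add: Bochner_Integration.integral_diff[OF int_bdd[OF phi_abs'] integrable_mult_right[OF int_bdd[OF gg_abs]]])
  finally show ?thesis .
qed

lemma Pk_step: "Pk (Suc k) \<le> Pk k"
proof -
  have "Pk (Suc k) = measure_pmf.expectation (mu k)
      (\<lambda>q. measure_pmf.expectation (moran_step V E r (fst q)) (\<lambda>S'. gg (S', snd q \<or> S' = {} \<or> S' = V)))"
    unfolding Pk_def
    by (simp add: integral_bind_pmf_real[OF gg_abs] case_prod_beta)
  also have "\<dots> \<le> measure_pmf.expectation (mu k) gg"
  proof (rule integral_mono)
    show "integrable (measure_pmf (mu k)) (\<lambda>q. measure_pmf.expectation (moran_step V E r (fst q)) (\<lambda>S'. gg (S', snd q \<or> S' = {} \<or> S' = V)))"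
      by (rule int_bdd[where B=1])
         (rule order_trans[OF integral_abs_bound], rule order_trans[OF integral_mono[where g="\<lambda>_. 1"]],
          auto intro!: int_bdd[where B=1] simp: gg_def)
    show "integrable (measure_pmf (mu k)) gg" by (rule int_bdd[OF gg_abs])
    fix q
    show "measure_pmf.expectation (moran_step V E r (fst q)) (\<lambda>S'. gg (S', snd q \<or> S' = {} \<or> S' = V)) \<le> gg q"
    proof (cases "snd q")
      case True then show ?thesis by (simp add: gg_def)
    next
      case False
      have "measure_pmf.expectation (moran_step V E r (fst q)) (\<lambda>S'. gg (S', snd q \<or> S' = {} \<or> S' = V))
          \<le> measure_pmf.expectation (moran_step V E r (fst q)) (\<lambda>_. 1)"
        by (rule integral_mono) (auto intro!: int_bdd[where B=1] simp: gg_def)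
      then show ?thesis using False by (simp add: gg_def)
    qed
  qed
  finally show ?thesis unfolding Pk_def .
qed


lemma Phi_nonneg: "0 \<le> Phi k"
  unfolding Phi_def by (rule integral_nonneg_AE) (simp add: phi_bounds finV)

lemma Pk_nonneg: "0 \<le> Pk k"
  unfolding Pk_def by (rule integral_nonneg_AE) (simp add: gg_def)

lemma Phi0: "Phi 0 \<le> 1"
  unfolding Phi_def using inv_deg_le1(1)[of E x0] x0 by (simp add: phi_def)

lemma dlt_nonneg: "0 \<le> dlt" using rlt by (simp add: dlt_def)

lemma main_ind: "Phi k + dlt * real k * Pk k \<le> Phi 0"
proof (induction k)
  case 0 then show ?case by simp
next
  case (Suc k)
  have "dlt * real (Suc k) * Pk (Suc k) \<le> dlt * real (Suc k) * Pk k"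
    using Pk_step[of k] dlt_nonneg by (intro mult_left_mono) auto
  then show ?case using Phi_step[of k] Suc.IH by (simp add: algebra_simps)
qed

lemma Pk_abs: "Pk k = 1 - absorbed_within V E r x0 k"
proof -
  have gi: "gg = indicator {p. \<not> snd p}" by (auto simp: gg_def indicator_def)
  have "Pk k = measure_pmf.prob (mu k) {p. \<not> snd p}" unfolding Pk_def gi
    by simp
  also have "{p. \<not> snd p} = UNIV - {p. snd p}" by auto
  also have "measure_pmf.prob (mu k) (UNIV - {p. snd p}) = 1 - measure_pmf.prob (mu k) {p. snd p}"
    using measure_pmf.prob_compl[of "{p. snd p}" "mu k"] by simp
  finally show ?thesis by (simp add: absorbed_within_def)
qed

end

theorem corollary6:
  fixes V :: "'a set" and E :: "'a \<Rightarrow> 'a \<Rightarrow> bool" and r \<epsilon> :: real and t :: nat and x :: 'a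
  assumes "conn_graph V E" and "card V \<ge> 2"
    and "0 < r" and "r < 1"
    and "0 < \<epsilon>" and "\<epsilon> < 1"
    and "real t \<ge> (1 / (1 - r)) * real (card V) ^ 3 / \<epsilon>"
    and "x \<in> V"
  shows "absorbed_within V E r x t \<ge> 1 - \<epsilon>"
proof -
  interpret cgx V E r x using assms by unfold_locales auto
  let ?n = "real (card V)"
  have n: "0 < ?n" using cardV_pos by simp
  have "dlt * real t * Pk t \<le> 1" using main_ind[of t] Phi_nonneg[of t] Phi0 by linarith
  moreover have "1 / \<epsilon> \<le> dlt * real t"
  proof -
    have "1 / \<epsilon> = (1 - r) / ?n ^ 3 * ((1 / (1 - r)) * ?n ^ 3 / \<epsilon>)"
    proof -
      have "1 - r \<noteq> 0" "?n ^ 3 \<noteq> 0" "\<epsilon> \<noteq> 0" using n assms(4,5) by auto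
      then show ?thesis by (simp add: field_simps)
    qed
    also have "\<dots> \<le> (1 - r) / ?n ^ 3 * real t"
      using assms(4,7) n by (intro mult_left_mono) auto
    finally show ?thesis by (simp add: dlt_def)
  qed
  ultimately have "1 / \<epsilon> * Pk t \<le> 1"
    using Pk_nonneg[of t] by (meson mult_right_mono order_trans)
  then have "Pk t \<le> \<epsilon>" using assms(5) by (simp add: field_simps)
  then show ?thesis using Pk_abs[of t] by simp
qed

end
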